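(* Let $X$ be a shift space and $k\ge1$. The $k$-th higher block shift space $X^{(k)}$ is eventually dendric if and only if $X$ is eventually dendric.
   Context: $A$ is a finite alphabet; a shift space is a closed shift-invariant subset $X\subseteq A^{\mathbb Z}$ with language $\mathcal L(X)$ (finite factors), $\mathcal L_k(X)=\mathcal L(X)\cap A^k$. Given a bijection $f:\mathcal L_k(X)\to A_k$ onto a new alphabet $A_k$, the $k$-th higher block code $\gamma_k:X\to A_k^{\mathbb Z}$ is defined by $\gamma_k(x)_n=f(x_n\cdots x_{n+k-1})$ for all $n\in\mathbb Z$, and $X^{(k)}=\gamma_k(X)$ is the $k$-th higher block shift space. For a shift space $Y$ over alphabet $B$ and $w\in\mathcal L(Y)$, the extension graph $\mathcal E_1(w)$ is the undirected bipartite graph with vertex set the disjoint union of $\{a\in B: aw\in\mathcal L(Y)\}$ and $\{b\in B: wb\in\mathcal L(Y)\}$ and an edge $(a,b)$ iff $awb\in\mathcal L(Y)$. $Y$ is eventually dendric if for some $m\ge0$, $\mathcal E_1(w)$ is a tree for every $w\in\mathcal L(Y)$ of length $\ge m$. *)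

theory Defs
  imports "HOL-Analysis.Analysis"
begin

definition shift :: "(int \<Rightarrow> 'a) \<Rightarrow> (int \<Rightarrow> 'a)" where
  "shift x = (\<lambda>n. x (n + 1))"

definition shift_space :: "'a set \<Rightarrow> (int \<Rightarrow> 'a) set \<Rightarrow> bool" where
  "shift_space A X \<longleftrightarrow> finite A \<and>
     X \<subseteq> topspace (product_topology (\<lambda>_::int. discrete_topology A) UNIV) \<and>
     closedin (product_topology (\<lambda>_::int. discrete_topology A) UNIV) X \<and>
     shift ` X = X"

definition factor :: "(int \<Rightarrow> 'a) \<Rightarrow> int \<Rightarrow> nat \<Rightarrow> 'a list" where
  "factor x n m = map (\<lambda>i. x (n + int i)) [0..<m]"

definition lang :: "(int \<Rightarrow> 'a) set \<Rightarrow> 'a list set" where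
  "lang X = {w. \<exists>x\<in>X. \<exists>n. w = factor x n (length w)}"

definition lang_k :: "(int \<Rightarrow> 'a) set \<Rightarrow> nat \<Rightarrow> 'a list set" where
  "lang_k X k = {w \<in> lang X. length w = k}"

definition higher_block_code :: "nat \<Rightarrow> ('a list \<Rightarrow> 'b) \<Rightarrow> (int \<Rightarrow> 'a) \<Rightarrow> (int \<Rightarrow> 'b)" where
  "higher_block_code k f x = (\<lambda>n. f (factor x n k))"

text \<open>Extension graph E_1(w): bipartite graph, left vertices Inl a (aw \<in> L),
right vertices Inr b (wb \<in> L), edge between Inl a and Inr b iff awb \<in> L.\<close>
definition ext_vertices :: "'a list set \<Rightarrow> 'a list \<Rightarrow> ('a + 'a) set" where
  "ext_vertices L w = Inl ` {a. a # w \<in> L} \<union> Inr ` {b. w @ [b] \<in> L}"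

definition ext_adj :: "'a list set \<Rightarrow> 'a list \<Rightarrow> ('a + 'a) \<Rightarrow> ('a + 'a) \<Rightarrow> bool" where
  "ext_adj L w u v \<longleftrightarrow>
     (\<exists>a b. ((u = Inl a \<and> v = Inr b) \<or> (u = Inr b \<and> v = Inl a)) \<and> a # w @ [b] \<in> L)"

definition graph_connected :: "'v set \<Rightarrow> ('v \<Rightarrow> 'v \<Rightarrow> bool) \<Rightarrow> bool" where
  "graph_connected V E \<longleftrightarrow> (\<forall>u\<in>V. \<forall>v\<in>V. (\<lambda>x y. x \<in> V \<and> y \<in> V \<and> E x y)\<^sup>*\<^sup>* u v)"

definition graph_has_cycle :: "'v set \<Rightarrow> ('v \<Rightarrow> 'v \<Rightarrow> bool) \<Rightarrow> bool" where
  "graph_has_cycle V E \<longleftrightarrow> (\<exists>cs. length cs \<ge> 3 \<and> distinct cs \<and> set cs \<subseteq> V \<and>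
      (\<forall>i. Suc i < length cs \<longrightarrow> E (cs ! i) (cs ! Suc i)) \<and> E (last cs) (hd cs))"

definition graph_tree :: "'v set \<Rightarrow> ('v \<Rightarrow> 'v \<Rightarrow> bool) \<Rightarrow> bool" where
  "graph_tree V E \<longleftrightarrow> V \<noteq> {} \<and> graph_connected V E \<and> \<not> graph_has_cycle V E"

definition ext_graph_is_tree :: "(int \<Rightarrow> 'a) set \<Rightarrow> 'a list \<Rightarrow> bool" where
  "ext_graph_is_tree Y w = graph_tree (ext_vertices (lang Y) w) (ext_adj (lang Y) w)"

definition eventually_dendric :: "(int \<Rightarrow> 'a) set \<Rightarrow> bool" where
  "eventually_dendric Y \<longleftrightarrow>
     (\<exists>m::nat. \<forall>w \<in> lang Y. length w \<ge> m \<longrightarrow> ext_graph_is_tree Y w)"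

end

theory Submission
  imports Defs
begin

definition code :: "nat \<Rightarrow> ('a list \<Rightarrow> 'b) \<Rightarrow> 'a list \<Rightarrow> 'b list" where
  "code k f v = map (\<lambda>i. f (take k (drop i v))) [0..<length v + 1 - k]"

lemma length_code[simp]: "length (code k f v) = length v + 1 - k"
  by (simp add: code_def)

lemma length_factor[simp]: "length (factor x n m) = m"
  by (simp add: factor_def)

lemma nth_factor[simp]: "i < m \<Longrightarrow> factor x n m ! i = x (n + int i)"
  by (simp add: factor_def)

lemma lang_sub:
  assumes "v \<in> lang X" "i + j \<le> length v"
  shows "take j (drop i v) \<in> lang X"
proof -
  define L where "L = length v"
  from assms(1) obtain x n where x: "x \<in> X" and v: "v = factor x n L"
    unfolding lang_def L_def by auto
  have "take j (drop i v) = factor x (n + int i) j"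
    unfolding v using assms(2) unfolding L_def[symmetric]
    by (intro nth_equalityI) (auto simp: add.assoc)
  then show ?thesis using x unfolding lang_def by auto
qed

lemma lang_Cons: "a # v \<in> lang X \<Longrightarrow> v \<in> lang X"
  using lang_sub[of "a # v" X 1 "length v"] by simp

lemma lang_snoc: "v @ [b] \<in> lang X \<Longrightarrow> v \<in> lang X"
  using lang_sub[of "v @ [b]" X 0 "length v"] by simp

lemma factor_gamma:
  assumes "k \<ge> 1"
  shows "factor (higher_block_code k f x) n m = code k f (factor x n (m + k - 1))"
proof (rule nth_equalityI)
  show "length (factor (higher_block_code k f x) n m) = length (code k f (factor x n (m + k - 1)))"
    using assms by simp
next
  fix i assume "i < length (factor (higher_block_code k f x) n m)"
  then have i: "i < m" by simp
  have "factor x (n + int i) k = take k (drop i (factor x n (m + k - 1)))"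
    using i assms by (intro nth_equalityI) (auto simp: add.assoc)
  then show "factor (higher_block_code k f x) n m ! i = code k f (factor x n (m + k - 1)) ! i"
    using i assms by (simp add: code_def higher_block_code_def)
qed

lemma LY_char:
  assumes "k \<ge> 1"
  shows "u \<in> lang (higher_block_code k f ` X) \<longleftrightarrow>
    (\<exists>v\<in>lang X. length v = length u + k - 1 \<and> u = code k f v)"
proof
  assume "u \<in> lang (higher_block_code k f ` X)"
  then obtain x n where "x \<in> X" and eq: "u = factor (higher_block_code k f x) n (length u)"
    unfolding lang_def by auto
  then show "\<exists>v\<in>lang X. length v = length u + k - 1 \<and> u = code k f v"
  proof (intro bexI conjI)
    show "factor x n (length u + k - 1) \<in> lang X" using \<open>x \<in> X\<close> unfolding lang_def by auto
    show "length (factor x n (length u + k - 1)) = length u + k - 1" by simp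
    show "u = code k f (factor x n (length u + k - 1))"
      by (rule trans[OF eq factor_gamma[OF assms]])
  qed
next
  assume "\<exists>v\<in>lang X. length v = length u + k - 1 \<and> u = code k f v"
  then obtain v where v: "v \<in> lang X" "length v = length u + k - 1" "u = code k f v" by blast
  then obtain x n where "x \<in> X" and ev: "v = factor x n (length v)" unfolding lang_def by blast
  have "v = factor x n (length u + k - 1)" by (subst v(2)[symmetric]) (rule ev)
  then have "code k f v = code k f (factor x n (length u + k - 1))" by (rule arg_cong)
  then have "u = code k f (factor x n (length u + k - 1))" by (rule trans[OF v(3)])
  then have "u = factor (higher_block_code k f x) n (length u)"
    by (rule trans[OF _ factor_gamma[OF assms, of f x n "length u", symmetric]])
  then have "\<exists>n. u = factor (higher_block_code k f x) n (length u)" by (rule exI)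
  then show "u \<in> lang (higher_block_code k f ` X)" using \<open>x \<in> X\<close>
    unfolding lang_def by blast
qed

lemma code_inj:
  assumes inj: "inj_on f (lang_k X k)" and k: "k \<ge> 1"
    and v: "v \<in> lang X" and v': "v' \<in> lang X" and len: "length v = length v'"
    and kv: "length v \<ge> k" and c: "code k f v = code k f v'"
  shows "v = v'"
proof (rule nth_equalityI)
  show "length v = length v'" by fact
next
  fix i assume i: "i < length v"
  define j where "j = min i (length v - k)"
  have jk: "j + k \<le> length v" using kv by (simp add: j_def)
  have "code k f v ! j = code k f v' ! j" using c by simp
  then have "f (take k (drop j v)) = f (take k (drop j v'))"
    using jk kv len by (simp add: code_def)
  moreover have "take k (drop j v) \<in> lang_k X k" "take k (drop j v') \<in> lang_k X k"
  proof -
    have "j + k \<le> length v'" using jk len by simp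
    then show "take k (drop j v) \<in> lang_k X k" "take k (drop j v') \<in> lang_k X k"
      using lang_sub[OF v jk] lang_sub[OF v'] jk unfolding lang_k_def by simp_all
  qed
  ultimately have eq: "take k (drop j v) = take k (drop j v')"
    using inj by (auto dest: inj_onD)
  have ij: "i - j < k" "j \<le> i" using i kv k by (auto simp: j_def min_def split: if_splits)
  have "take k (drop j v) ! (i - j) = take k (drop j v') ! (i - j)" using eq by simp
  then show "v ! i = v' ! i" using ij i len by simp
qed

lemma code_Cons:
  assumes "k \<ge> 1" "length v \<ge> k - 1"
  shows "code k f (a # v) = f (a # take (k - 1) v) # code k f v"
proof -
  have e: "length (a # v) + 1 - k = Suc (length v + 1 - k)" using assms by simp
  have "take k (a # v) = a # take (k - 1) v" using assms by (cases k) auto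
  then show ?thesis unfolding code_def e map_upt_Suc by simp
qed

lemma code_snoc:
  assumes "k \<ge> 1" "length v \<ge> k - 1"
  shows "code k f (v @ [b]) = code k f v @ [f (drop (length v + 1 - k) v @ [b])]"
proof -
  have e: "length (v @ [b]) + 1 - k = Suc (length v + 1 - k)" using assms by simp
  have 1: "map (\<lambda>i. f (take k (drop i (v @ [b])))) [0..<length v + 1 - k]
      = map (\<lambda>i. f (take k (drop i v))) [0..<length v + 1 - k]"
    using assms by (intro map_cong) auto
  have 2: "take k (drop (length v + 1 - k) (v @ [b])) = drop (length v + 1 - k) v @ [b]"
    using assms by simp
  show ?thesis unfolding code_def e upt_Suc_append[OF le0] map_append list.map(1,2)
    by (simp only: 1 2)
qed

lemma code_Cons_snoc:
  assumes "k \<ge> 1" "length v \<ge> k - 1"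
  shows "code k f (a # v @ [b]) =
     f (a # take (k - 1) v) # code k f v @ [f (drop (length v + 1 - k) v @ [b])]"
  using assms code_Cons[of k "v @ [b]" f a] code_snoc[of k v f b] by simp

definition giso :: "('v \<Rightarrow> 'w) \<Rightarrow> 'v set \<Rightarrow> 'w set \<Rightarrow> ('v \<Rightarrow> 'v \<Rightarrow> bool) \<Rightarrow> ('w \<Rightarrow> 'w \<Rightarrow> bool) \<Rightarrow> bool" where
  "giso g V W E F \<longleftrightarrow> bij_betw g V W \<and> (\<forall>x\<in>V. \<forall>y\<in>V. F (g x) (g y) = E x y)"

lemma giso_inv:
  assumes "giso g V W E F"
  shows "giso (inv_into V g) W V F E"
proof -
  have b: "bij_betw g V W" and e: "\<forall>x\<in>V. \<forall>y\<in>V. F (g x) (g y) = E x y"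
    using assms by (auto simp: giso_def)
  have b': "bij_betw (inv_into V g) W V" by (rule bij_betw_inv_into[OF b])
  have "\<forall>x\<in>W. \<forall>y\<in>W. E (inv_into V g x) (inv_into V g y) = F x y"
  proof (intro ballI)
    fix x y assume x: "x \<in> W" and y: "y \<in> W"
    have "inv_into V g x \<in> V" "inv_into V g y \<in> V" using b' x y bij_betwE by blast+
    moreover have "g (inv_into V g x) = x" "g (inv_into V g y) = y"
      using b x y by (auto intro: f_inv_into_f simp: bij_betw_def)
    ultimately show "E (inv_into V g x) (inv_into V g y) = F x y" using e by metis
  qed
  then show ?thesis using b' by (simp add: giso_def)
qed

lemma giso_rtrancl:
  assumes "giso g V W E F"
    and "(\<lambda>x y. x \<in> V \<and> y \<in> V \<and> E x y)\<^sup>*\<^sup>* u v" and "u \<in> V"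
  shows "(\<lambda>x y. x \<in> W \<and> y \<in> W \<and> F x y)\<^sup>*\<^sup>* (g u) (g v)"
  using assms(2,3)
proof (induction rule: rtranclp_induct)
  case base then show ?case by simp
next
  case (step y z)
  have "g y \<in> W" "g z \<in> W" "F (g y) (g z)" using step(2) assms(1)
    by (auto simp: giso_def bij_betw_def)
  moreover have "(\<lambda>x y. x \<in> W \<and> y \<in> W \<and> F x y)\<^sup>*\<^sup>* (g u) (g y)" using step by simp
  ultimately show ?case by (simp add: rtranclp.rtrancl_into_rtrancl)
qed

lemma giso_connected:
  assumes "giso g V W E F" "graph_connected V E"
  shows "graph_connected W F"
  unfolding graph_connected_def
proof (intro ballI)
  fix u v assume "u \<in> W" "v \<in> W"
  then obtain u0 v0 where "u0 \<in> V" "v0 \<in> V" "u = g u0" "v = g v0"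
    using assms(1) unfolding giso_def bij_betw_def by auto
  then show "(\<lambda>x y. x \<in> W \<and> y \<in> W \<and> F x y)\<^sup>*\<^sup>* u v"
    using giso_rtrancl[OF assms(1)] assms(2) unfolding graph_connected_def by auto
qed

lemma giso_cycle:
  assumes "giso g V W E F" "graph_has_cycle V E"
  shows "graph_has_cycle W F"
proof -
  obtain cs where cs: "length cs \<ge> 3" "distinct cs" "set cs \<subseteq> V"
    "\<forall>i. Suc i < length cs \<longrightarrow> E (cs ! i) (cs ! Suc i)" "E (last cs) (hd cs)"
    using assms(2) unfolding graph_has_cycle_def by blast
  have b: "inj_on g V" "g ` V = W" and e: "\<forall>x\<in>V. \<forall>y\<in>V. F (g x) (g y) = E x y"
    using assms(1) by (auto simp: giso_def bij_betw_def)
  have ne: "cs \<noteq> []" using cs(1) by auto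
  have "length (map g cs) \<ge> 3" using cs by simp
  moreover have "distinct (map g cs)" using cs(2,3) b(1) by (simp add: distinct_map inj_on_subset)
  moreover have "set (map g cs) \<subseteq> W" using cs(3) b(2) by auto
  moreover have "\<forall>i. Suc i < length (map g cs) \<longrightarrow> F (map g cs ! i) (map g cs ! Suc i)"
  proof (intro allI impI)
    fix i assume i: "Suc i < length (map g cs)"
    then have "cs ! i \<in> set cs" "cs ! Suc i \<in> set cs" by simp_all
    then have "cs ! i \<in> V" "cs ! Suc i \<in> V" using cs(3) by blast+
    then show "F (map g cs ! i) (map g cs ! Suc i)" using i cs(4) e by auto
  qed
  moreover have "F (last (map g cs)) (hd (map g cs))"
  proof -
    have "last cs \<in> V" "hd cs \<in> V" using ne cs(3) last_in_set hd_in_set by blast+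
    then show ?thesis using ne cs(5) e by (simp add: last_map hd_map)
  qed
  ultimately show ?thesis unfolding graph_has_cycle_def by blast
qed

lemma giso_tree:
  assumes "giso g V W E F"
  shows "graph_tree V E \<longleftrightarrow> graph_tree W F"
proof -
  have i: "giso (inv_into V g) W V F E" by (rule giso_inv[OF assms])
  have "V \<noteq> {} \<longleftrightarrow> W \<noteq> {}" using assms by (auto simp: giso_def bij_betw_def)
  then show ?thesis unfolding graph_tree_def
    using giso_connected[OF assms] giso_connected[OF i] giso_cycle[OF assms] giso_cycle[OF i]
    by blast
qed

locale hb =
  fixes X :: "(int \<Rightarrow> 'a) set" and k :: nat and f :: "'a list \<Rightarrow> 'b"
  assumes k: "k \<ge> 1" and inj: "inj_on f (lang_k X k)"
begin

abbreviation "LX \<equiv> lang X"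
abbreviation "LY \<equiv> lang (higher_block_code k f ` X)"

lemma LY: "u \<in> LY \<longleftrightarrow> (\<exists>v\<in>LX. length v = length u + k - 1 \<and> u = code k f v)"
  using LY_char[OF k] .

lemma code_in_LY: "v \<in> LX \<Longrightarrow> length v \<ge> k \<Longrightarrow> code k f v \<in> LY"
  using LY k by auto

context
  fixes v assumes v: "v \<in> LX" and kv: "length v \<ge> k"
begin

abbreviation "p \<equiv> take (k - 1) v"
abbreviation "s \<equiv> drop (length v + 1 - k) v"
abbreviation "u \<equiv> code k f v"

lemma inj_L: "a # v \<in> LX \<Longrightarrow> a' # v \<in> LX \<Longrightarrow> f (a # p) = f (a' # p) \<Longrightarrow> a = a'"
proof -
  assume a: "a # v \<in> LX" and a': "a' # v \<in> LX" and e: "f (a # p) = f (a' # p)"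
  have "take k (a # v) \<in> LX" "take k (a' # v) \<in> LX"
    using lang_sub[OF a, of 0 k] lang_sub[OF a', of 0 k] kv by auto
  moreover have "take k (a # v) = a # p" "take k (a' # v) = a' # p" using k by (cases k, auto)+
  ultimately have "a # p \<in> lang_k X k" "a' # p \<in> lang_k X k" using kv k
    unfolding lang_k_def by auto
  then show "a = a'" using e inj by (auto dest: inj_onD)
qed

lemma inj_R: "v @ [b] \<in> LX \<Longrightarrow> v @ [b'] \<in> LX \<Longrightarrow> f (s @ [b]) = f (s @ [b']) \<Longrightarrow> b = b'"
proof -
  assume a: "v @ [b] \<in> LX" and a': "v @ [b'] \<in> LX" and e: "f (s @ [b]) = f (s @ [b'])"
  have "take k (drop (length v + 1 - k) (v @ [b])) \<in> LX"
       "take k (drop (length v + 1 - k) (v @ [b'])) \<in> LX"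
    using lang_sub[OF a, of "length v + 1 - k" k] lang_sub[OF a', of "length v + 1 - k" k] kv by auto
  moreover have "take k (drop (length v + 1 - k) (v @ [b])) = s @ [b]"
     "take k (drop (length v + 1 - k) (v @ [b'])) = s @ [b']" using kv k by auto
  ultimately have "s @ [b] \<in> lang_k X k" "s @ [b'] \<in> lang_k X k" using kv k
    unfolding lang_k_def by auto
  then show "b = b'" using e inj by (auto dest: inj_onD)
qed

lemma lenu: "length u + k - 1 = length v" using kv by simp

lemma left_char: "c # u \<in> LY \<longleftrightarrow> (\<exists>a. a # v \<in> LX \<and> c = f (a # p))"
proof
  assume h: "c # u \<in> LY"
  obtain w where w1: "w \<in> LX" and w2: "length w = length (c # u) + k - 1"
    and w3: "c # u = code k f w" using h unfolding LY by blast
  have lw: "length w = length v + 1" using w2 kv k by simp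
  obtain a w' where ww: "w = a # w'" using lw by (cases w) auto
  have lw': "length w' = length v" using lw ww by simp
  have "code k f w = f (a # take (k - 1) w') # code k f w'"
    unfolding ww by (rule code_Cons[OF k]) (use lw' kv in simp)
  with w3 have "c # u = f (a # take (k - 1) w') # code k f w'" by (rule trans)
  then have cu: "c = f (a # take (k - 1) w')" "u = code k f w'" by (simp_all only: list.inject)
  have w'L: "w' \<in> LX" using w1 unfolding ww by (rule lang_Cons)
  have "w' = v" by (rule code_inj[OF inj k w'L v]) (use lw' kv cu(2) in simp_all)
  then have "a # v \<in> LX" "c = f (a # p)" using w1 cu(1) unfolding ww by simp_all
  then show "\<exists>a. a # v \<in> LX \<and> c = f (a # p)" by blast
next
  assume "\<exists>a. a # v \<in> LX \<and> c = f (a # p)"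
  then obtain a where a1: "a # v \<in> LX" and a2: "c = f (a # p)" by blast
  have "code k f (a # v) = f (a # p) # u" by (rule code_Cons[OF k]) (use kv in simp)
  then have "c # u = code k f (a # v)" using a2 by simp
  moreover have "length (a # v) = length (c # u) + k - 1" using kv k by simp
  ultimately show "c # u \<in> LY" unfolding LY using a1 by blast
qed

lemma right_char: "u @ [c] \<in> LY \<longleftrightarrow> (\<exists>b. v @ [b] \<in> LX \<and> c = f (s @ [b]))"
proof
  assume h: "u @ [c] \<in> LY"
  obtain w where w1: "w \<in> LX" and w2: "length w = length (u @ [c]) + k - 1"
    and w3: "u @ [c] = code k f w" using h unfolding LY by blast
  have lw: "length w = length v + 1" using w2 kv k by simp
  obtain b w' where ww: "w = w' @ [b]" using lw by (cases w rule: rev_cases) auto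
  have lw': "length w' = length v" using lw ww by simp
  have "code k f w = code k f w' @ [f (drop (length w' + 1 - k) w' @ [b])]"
    unfolding ww by (rule code_snoc[OF k]) (use lw' kv in simp)
  with w3 have "u @ [c] = code k f w' @ [f (drop (length w' + 1 - k) w' @ [b])]" by (rule trans)
  then have cu: "u = code k f w'" "c = f (drop (length w' + 1 - k) w' @ [b])"
    by (simp_all only: append1_eq_conv)
  have w'L: "w' \<in> LX" using w1 unfolding ww by (rule lang_snoc)
  have "w' = v" by (rule code_inj[OF inj k w'L v]) (use lw' kv cu(1) in simp_all)
  then have "v @ [b] \<in> LX" "c = f (s @ [b])" using w1 cu(2) unfolding ww by simp_all
  then show "\<exists>b. v @ [b] \<in> LX \<and> c = f (s @ [b])" by blast
next
  assume "\<exists>b. v @ [b] \<in> LX \<and> c = f (s @ [b])"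
  then obtain b where b1: "v @ [b] \<in> LX" and b2: "c = f (s @ [b])" by blast
  have "code k f (v @ [b]) = u @ [f (s @ [b])]" by (rule code_snoc[OF k]) (use kv in simp)
  then have "u @ [c] = code k f (v @ [b])" using b2 by simp
  moreover have "length (v @ [b]) = length (u @ [c]) + k - 1" using kv k by simp
  ultimately show "u @ [c] \<in> LY" unfolding LY using b1 by blast
qed

lemma both_char: "c # u @ [d] \<in> LY \<longleftrightarrow>
   (\<exists>a b. a # v @ [b] \<in> LX \<and> c = f (a # p) \<and> d = f (s @ [b]))"
proof
  assume h: "c # u @ [d] \<in> LY"
  obtain w where w1: "w \<in> LX" and w2: "length w = length (c # u @ [d]) + k - 1"
    and w3: "c # u @ [d] = code k f w" using h unfolding LY by blast
  have lw: "length w = length v + 2" using w2 kv k by simp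
  obtain a w'' where ww0: "w = a # w''" using lw by (cases w) auto
  obtain b w' where ww1: "w'' = w' @ [b]" using lw ww0 by (cases w'' rule: rev_cases) auto
  have ww: "w = a # w' @ [b]" using ww0 ww1 by simp
  have lw': "length w' = length v" using lw ww by simp
  have "code k f w = f (a # take (k - 1) w') # code k f w' @ [f (drop (length w' + 1 - k) w' @ [b])]"
    unfolding ww by (rule code_Cons_snoc[OF k]) (use lw' kv in simp)
  with w3 have "c # u @ [d] = f (a # take (k - 1) w') # code k f w' @ [f (drop (length w' + 1 - k) w' @ [b])]"
    by (rule trans)
  then have cu: "c = f (a # take (k - 1) w')" "u = code k f w'"
     "d = f (drop (length w' + 1 - k) w' @ [b])" by (simp_all only: list.inject append1_eq_conv)
  have "a # w' \<in> LX" using lang_snoc[of "a # w'" b X] w1 unfolding ww by simp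
  then have w'L: "w' \<in> LX" by (rule lang_Cons)
  have "w' = v" by (rule code_inj[OF inj k w'L v]) (use lw' kv cu(2) in simp_all)
  then have "a # v @ [b] \<in> LX" "c = f (a # p)" "d = f (s @ [b])"
    using w1 cu(1,3) unfolding ww by simp_all
  then show "\<exists>a b. a # v @ [b] \<in> LX \<and> c = f (a # p) \<and> d = f (s @ [b])" by blast
next
  assume "\<exists>a b. a # v @ [b] \<in> LX \<and> c = f (a # p) \<and> d = f (s @ [b])"
  then obtain a b where ab: "a # v @ [b] \<in> LX" and c: "c = f (a # p)" and d: "d = f (s @ [b])"
    by blast
  have "code k f (a # v @ [b]) = f (a # p) # u @ [f (s @ [b])]"
    by (rule code_Cons_snoc[OF k]) (use kv in simp)
  then have "c # u @ [d] = code k f (a # v @ [b])" using c d by simp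
  moreover have "length (a # v @ [b]) = length (c # u @ [d]) + k - 1" using kv k by simp
  ultimately show "c # u @ [d] \<in> LY" unfolding LY using ab by blast
qed

definition gm :: "'a + 'a \<Rightarrow> 'b + 'b" where
  "gm = case_sum (\<lambda>a. Inl (f (a # p))) (\<lambda>b. Inr (f (s @ [b])))"

lemma edge: "a # v \<in> LX \<Longrightarrow> v @ [b] \<in> LX \<Longrightarrow>
   f (a # p) # u @ [f (s @ [b])] \<in> LY \<longleftrightarrow> a # v @ [b] \<in> LX"
proof -
  assume a: "a # v \<in> LX" and b: "v @ [b] \<in> LX"
  show ?thesis
  proof
    assume "f (a # p) # u @ [f (s @ [b])] \<in> LY"
    then obtain a0 b0 where w: "a0 # v @ [b0] \<in> LX" "f (a # p) = f (a0 # p)"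
      "f (s @ [b]) = f (s @ [b0])" unfolding both_char by blast
    have "a0 # v \<in> LX" using lang_snoc[of "a0 # v" b0 X] w(1) by simp
    moreover have "v @ [b0] \<in> LX" using lang_Cons[of a0 "v @ [b0]" X] w(1) by simp
    ultimately have "a = a0" "b = b0" using inj_L[OF a] inj_R[OF b] w(2,3) by auto
    then show "a # v @ [b] \<in> LX" using w(1) by simp
  next
    assume "a # v @ [b] \<in> LX"
    then show "f (a # p) # u @ [f (s @ [b])] \<in> LY" unfolding both_char by blast
  qed
qed

lemma ext_iso: "giso gm (ext_vertices LX v) (ext_vertices LY u) (ext_adj LX v) (ext_adj LY u)"
  unfolding giso_def
proof (intro conjI ballI)
  show "bij_betw gm (ext_vertices LX v) (ext_vertices LY u)"
    unfolding bij_betw_def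
  proof
    show "inj_on gm (ext_vertices LX v)"
    proof (rule inj_onI)
      fix x y assume x: "x \<in> ext_vertices LX v" and y: "y \<in> ext_vertices LX v"
        and e: "gm x = gm y"
      show "x = y"
      proof (cases x; cases y)
        fix a a' assume "x = Inl a" "y = Inl a'"
        then show "x = y" using x y e inj_L by (simp add: ext_vertices_def gm_def image_iff)
      next
        fix b b' assume "x = Inr b" "y = Inr b'"
        then show "x = y" using x y e inj_R by (simp add: ext_vertices_def gm_def image_iff)
      qed (use e in \<open>simp_all add: gm_def\<close>)
    qed
    have 1: "gm ` ext_vertices LX v = Inl ` ((\<lambda>a. f (a # p)) ` {a. a # v \<in> LX})
        \<union> Inr ` ((\<lambda>b. f (s @ [b])) ` {b. v @ [b] \<in> LX})"
    proof -
      have g1: "gm (Inl a) = Inl (f (a # p))" for a by (simp add: gm_def)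
      have g2: "gm (Inr b) = Inr (f (s @ [b]))" for b by (simp add: gm_def)
      show ?thesis unfolding ext_vertices_def image_Un image_image g1 g2 by (rule refl)
    qed
    have 2: "{c. c # u \<in> LY} = (\<lambda>a. f (a # p)) ` {a. a # v \<in> LX}"
      unfolding left_char by blast
    have 3: "{c. u @ [c] \<in> LY} = (\<lambda>b. f (s @ [b])) ` {b. v @ [b] \<in> LX}"
      unfolding right_char by blast
    show "gm ` ext_vertices LX v = ext_vertices LY u"
      by (subst 1) (simp only: ext_vertices_def 2 3)
  qed
next
  fix x y assume x: "x \<in> ext_vertices LX v" and y: "y \<in> ext_vertices LX v"
  show "ext_adj LY u (gm x) (gm y) = ext_adj LX v x y"
  proof (cases x)
    case (Inl a)
    then have a: "a # v \<in> LX" using x by (auto simp: ext_vertices_def)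
    show ?thesis
    proof (cases y)
      case (Inr b)
      then have b: "v @ [b] \<in> LX" using y by (auto simp: ext_vertices_def)
      show ?thesis using Inl Inr edge[OF a b] by (auto simp: ext_adj_def gm_def)
    qed (use Inl in \<open>auto simp: ext_adj_def gm_def\<close>)
  next
    case (Inr b)
    then have b: "v @ [b] \<in> LX" using x by (auto simp: ext_vertices_def)
    show ?thesis
    proof (cases y)
      case (Inl a)
      then have a: "a # v \<in> LX" using y by (auto simp: ext_vertices_def)
      show ?thesis using Inl Inr edge[OF a b] by (auto simp: ext_adj_def gm_def)
    qed (use Inr in \<open>auto simp: ext_adj_def gm_def\<close>)
  qed
qed

lemma tree_iff: "ext_graph_is_tree (higher_block_code k f ` X) u \<longleftrightarrow> ext_graph_is_tree X v"
  unfolding ext_graph_is_tree_def using giso_tree[OF ext_iso] by simp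

end
end

theorem mainTheorem9:
  fixes A :: "'a set" and X :: "(int \<Rightarrow> 'a) set" and k :: nat
    and f :: "'a list \<Rightarrow> 'b" and Ak :: "'b set"
  assumes "shift_space A X"
    and "k \<ge> 1"
    and "bij_betw f (lang_k X k) Ak"
  shows "eventually_dendric (higher_block_code k f ` X) \<longleftrightarrow> eventually_dendric X"
proof -
  interpret hb X k f using assms(2,3) by unfold_locales (auto simp: bij_betw_def)
  show ?thesis
  proof
    assume "eventually_dendric (higher_block_code k f ` X)"
    then obtain m where m: "\<forall>w\<in>LY. length w \<ge> m \<longrightarrow> ext_graph_is_tree (higher_block_code k f ` X) w"
      unfolding eventually_dendric_def by blast
    have "\<forall>v\<in>LX. length v \<ge> m + k \<longrightarrow> ext_graph_is_tree X v"
    proof (intro ballI impI)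
      fix v assume v: "v \<in> LX" and l: "length v \<ge> m + k"
      then have kv: "length v \<ge> k" by simp
      have "code k f v \<in> LY" using code_in_LY[OF v kv] .
      moreover have "length (code k f v) \<ge> m" using l by simp
      ultimately show "ext_graph_is_tree X v" using m tree_iff[OF v kv] by blast
    qed
    then show "eventually_dendric X" unfolding eventually_dendric_def by blast
  next
    assume "eventually_dendric X"
    then obtain m where m: "\<forall>w\<in>LX. length w \<ge> m \<longrightarrow> ext_graph_is_tree X w"
      unfolding eventually_dendric_def by blast
    have "\<forall>u\<in>LY. length u \<ge> m + 1 \<longrightarrow> ext_graph_is_tree (higher_block_code k f ` X) u"
    proof (intro ballI impI)
      fix u assume u: "u \<in> LY" and l: "length u \<ge> m + 1"
      then obtain v where v: "v \<in> LX" "length v = length u + k - 1" "u = code k f v"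
        unfolding LY by blast
      have kv: "length v \<ge> k" using v(2) l by simp
      have "length v \<ge> m" using v(2) l by simp
      then show "ext_graph_is_tree (higher_block_code k f ` X) u"
        using m v tree_iff[OF v(1) kv] by blast
    qed
    then show "eventually_dendric (higher_block_code k f ` X)" unfolding eventually_dendric_def by blast
  qed
qed

end
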